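(* Let $\gamma>0$, $\mu_1,\mu_2>0$, and let $\tilde G^1_{\gamma,\mu_1}$ and $\tilde G^2_{-\gamma,\mu_2}$ be independent. Then for every $t>0$, $\tilde G^1_{\gamma,\mu_1}(\tilde G^2_{-\gamma,\mu_2}(t))$ has density $$q(x,t)=\gamma\,\frac{x^{\gamma\mu_1-1}t^{\gamma\mu_2}}{(x^\gamma+t^\gamma)^{\mu_1+\mu_2}}\,\frac{\Gamma(\mu_1+\mu_2)}{\Gamma(\mu_1)\Gamma(\mu_2)},\qquad x>0,$$ and $\tilde G^1_{\gamma,\mu_1}(\tilde G^2_{-\gamma,\mu_2}(t))$ has the same distribution as $\tilde G^1_{\gamma,\mu_1}(t^{1/2})\,\tilde G^2_{-\gamma,\mu_2}(t^{1/2})$. Moreover, when $\mu_1=\mu_2=\mu$, $\tilde G^1_{-\gamma,\mu}(\tilde G^2_{\gamma,\mu}(t))$ has the same distribution as $\tilde G^1_{\gamma,\mu}(\tilde G^2_{-\gamma,\mu}(t))$ for every $t>0$.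
   Context: For $\gamma>0,\mu>0$: $\tilde G_{\gamma,\mu}(t)$ is a positive process whose value at time $t$ has density $\gamma (x/t)^{\mu\gamma-1}e^{-(x/t)^{\gamma}}/(t\Gamma(\mu))$, $x>0$; $\tilde G_{-\gamma,\mu}(t)$ is a positive process whose value at time $t$ has density $\gamma (x/t)^{-\mu\gamma-1}e^{-(x/t)^{-\gamma}}/(t\Gamma(\mu))$, $x>0$. Composition of independent processes: if $X$ has marginal densities $f_X(x,s)$ and $Y\ge0$ is independent with marginal densities $f_Y(s,t)$, then $X(Y(t))$ has density $\int_0^\infty f_X(x,s)f_Y(s,t)\,ds$. *)

theory Defs
  imports "HOL-Probability.Probability"
begin

text \<open>Marginal density at time t of the generalized gamma process G~_{gamma,mu}(t).\<close>
definition gg_pos :: "real \<Rightarrow> real \<Rightarrow> real \<Rightarrow> real \<Rightarrow> real" where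
  "gg_pos \<gamma> \<mu> x t = \<gamma> * (x / t) powr (\<mu> * \<gamma> - 1) * exp (- ((x / t) powr \<gamma>)) / (t * Gamma \<mu>)"

text \<open>Marginal density at time t of G~_{-gamma,mu}(t).\<close>
definition gg_neg :: "real \<Rightarrow> real \<Rightarrow> real \<Rightarrow> real \<Rightarrow> real" where
  "gg_neg \<gamma> \<mu> x t = \<gamma> * (x / t) powr (- \<mu> * \<gamma> - 1) * exp (- ((x / t) powr (- \<gamma>))) / (t * Gamma \<mu>)"

definition law_of_density :: "(real \<Rightarrow> real) \<Rightarrow> real measure" where
  "law_of_density f = density lborel (\<lambda>x. indicator {0<..} x * ennreal (f x))"

text \<open>Density of the composition X(Y(t)) of independent processes X and Y (Y >= 0),
  given marginal densities fX(x,s) and fY(s,t).\<close>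
definition comp_density :: "(real \<Rightarrow> real \<Rightarrow> real) \<Rightarrow> (real \<Rightarrow> real \<Rightarrow> real) \<Rightarrow> real \<Rightarrow> real \<Rightarrow> ennreal" where
  "comp_density fX fY x t = (\<integral>\<^sup>+ s. indicator {0<..} s * ennreal (fX x s * fY s t) \<partial>lborel)"

definition comp_law :: "(real \<Rightarrow> real \<Rightarrow> real) \<Rightarrow> (real \<Rightarrow> real \<Rightarrow> real) \<Rightarrow> real \<Rightarrow> real measure" where
  "comp_law fX fY t = density lborel (\<lambda>x. indicator {0<..} x * comp_density fX fY x t)"

definition prod_law :: "real measure \<Rightarrow> real measure \<Rightarrow> real measure" where
  "prod_law M1 M2 = distr (M1 \<Otimes>\<^sub>M M2) lborel (\<lambda>(a, b). a * b)"

end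

theory Submission
  imports Defs
begin


lemma nn_exp_subst:
  fixes f :: "real \<Rightarrow> real"
  assumes f[measurable]: "f \<in> borel_measurable borel" and nn: "\<And>x. f x \<ge> 0"
  shows "(\<integral>\<^sup>+x. indicator {0<..} x * ennreal (f x) \<partial>lborel) = (\<integral>\<^sup>+v. ennreal (f (exp v) * exp v) \<partial>lborel)"
proof -
  define F where "F = (\<lambda>(n::nat) x. ennreal (f x * indicator {exp (-real n)..exp (real n)} x))"
  define G where "G = (\<lambda>(n::nat) x. ennreal (f (exp x) * exp x * indicator {-real n..real n} x))"
  have sub: "integral\<^sup>N lborel (F n) = integral\<^sup>N lborel (G n)" for n
    unfolding F_def G_def
    by (rule nn_integral_substitution[where g=exp and g'=exp and a="-real n" and b="real n", simplified])
       (auto simp: set_borel_measurable_def intro!: derivative_eq_intros continuous_intros)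
  have incF: "incseq F"
    unfolding F_def incseq_def le_fun_def
  proof (intro allI impI)
    fix m n :: nat and x :: real assume "m \<le> n"
    hence "exp (- real n) \<le> exp (- real m)" "exp (real m) \<le> exp (real n)" by auto
    thus "ennreal (f x * indicator {exp (- real m)..exp (real m)} x) \<le> ennreal (f x * indicator {exp (- real n)..exp (real n)} x)"
      using nn[of x] by (auto intro!: ennreal_leI simp: indicator_def simp del: exp_le_cancel_iff)
  qed
  have incG: "incseq G"
    unfolding G_def incseq_def le_fun_def
  proof (intro allI impI)
    fix m n :: nat and x :: real assume "m \<le> n"
    thus "ennreal (f (exp x) * exp x * indicator {- real m..real m} x) \<le> ennreal (f (exp x) * exp x * indicator {- real n..real n} x)"
      using nn[of "exp x"] by (auto intro!: ennreal_leI simp: indicator_def)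
  qed
  have supF: "(SUP n. F n x) = indicator {0<..} x * ennreal (f x)" for x
  proof (cases "x > 0")
    case True
    obtain n :: nat where n: "\<bar>ln x\<bar> \<le> real n" using real_arch_simple by blast
    have "exp (- real n) \<le> x" using n True
      by (metis abs_le_D2 exp_ln exp_le_cancel_iff minus_le_iff)
    moreover have "x \<le> exp (real n)" using n True
      by (metis abs_le_D1 exp_ln exp_le_cancel_iff)
    ultimately have "F n x = ennreal (f x)" by (simp add: F_def)
    moreover have "F m x \<le> ennreal (f x)" for m using nn[of x]
      by (auto simp: F_def indicator_def intro!: ennreal_leI)
    ultimately have "(SUP n. F n x) = ennreal (f x)"
      by (intro antisym SUP_least SUP_upper2[of n]) auto
    thus ?thesis using True by simp
  next
    case False
    have "F n x = 0" for n using False exp_gt_zero[of "- real n"] by (auto simp: F_def indicator_def simp del: exp_gt_zero)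
    thus ?thesis using False by simp
  qed
  have supG: "(SUP n. G n x) = ennreal (f (exp x) * exp x)" for x
  proof -
    obtain n :: nat where n: "\<bar>x\<bar> \<le> real n" using real_arch_simple by blast
    hence "x \<in> {-real n..real n}" by auto
    hence "G n x = ennreal (f (exp x) * exp x)" by (simp add: G_def)
    moreover have "G m x \<le> ennreal (f (exp x) * exp x)" for m using nn[of "exp x"]
      by (auto simp: G_def indicator_def intro!: ennreal_leI)
    ultimately show ?thesis by (intro antisym SUP_least SUP_upper2[of n]) auto
  qed
  have "(\<integral>\<^sup>+x. indicator {0<..} x * ennreal (f x) \<partial>lborel) = (\<integral>\<^sup>+x. (SUP n. F n x) \<partial>lborel)"
    by (simp add: supF)
  also have "\<dots> = (SUP n. integral\<^sup>N lborel (F n))"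
    by (rule nn_integral_monotone_convergence_SUP[OF incF]) (auto simp: F_def)
  also have "\<dots> = (SUP n. integral\<^sup>N lborel (G n))" by (simp add: sub)
  also have "\<dots> = (\<integral>\<^sup>+x. (SUP n. G n x) \<partial>lborel)"
    by (rule nn_integral_monotone_convergence_SUP[OF incG, symmetric]) (auto simp: G_def)
  also have "\<dots> = (\<integral>\<^sup>+v. ennreal (f (exp v) * exp v) \<partial>lborel)" by (simp add: supG)
  finally show ?thesis .
qed

lemma nn_pow_subst:
  fixes f :: "real \<Rightarrow> real" and c :: real
  assumes f[measurable]: "f \<in> borel_measurable borel" and nn: "\<And>x. f x \<ge> 0" and c: "c \<noteq> 0"
  shows "(\<integral>\<^sup>+x. indicator {0<..} x * ennreal (f x) \<partial>lborel)
     = ennreal \<bar>c\<bar> * (\<integral>\<^sup>+y. indicator {0<..} y * ennreal (f (y powr c) * y powr (c - 1)) \<partial>lborel)"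
proof -
  have "(\<integral>\<^sup>+y. indicator {0<..} y * ennreal (f (y powr c) * y powr (c - 1)) \<partial>lborel)
      = (\<integral>\<^sup>+v. ennreal (f (exp v powr c) * exp v powr (c - 1) * exp v) \<partial>lborel)"
    by (rule nn_exp_subst) (auto intro!: mult_nonneg_nonneg nn)
  also have "\<dots> = (\<integral>\<^sup>+v. ennreal (f (exp (0 + c * v)) * exp (0 + c * v)) \<partial>lborel)"
  proof (intro nn_integral_cong)
    fix v :: real
    have "exp v powr c = exp (c * v)" by (simp add: powr_def mult.commute)
    moreover have "exp v powr (c - 1) * exp v = exp (c * v)"
      by (simp add: powr_def exp_add[symmetric] algebra_simps)
    ultimately show "ennreal (f (exp v powr c) * exp v powr (c - 1) * exp v) = ennreal (f (exp (0 + c * v)) * exp (0 + c * v))"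
      by (simp add: mult.assoc)
  qed
  finally have R: "(\<integral>\<^sup>+y. indicator {0<..} y * ennreal (f (y powr c) * y powr (c - 1)) \<partial>lborel)
      = (\<integral>\<^sup>+v. ennreal (f (exp (0 + c * v)) * exp (0 + c * v)) \<partial>lborel)" .
  have "(\<integral>\<^sup>+x. indicator {0<..} x * ennreal (f x) \<partial>lborel) = (\<integral>\<^sup>+v. ennreal (f (exp v) * exp v) \<partial>lborel)"
    by (rule nn_exp_subst[OF f nn])
  also have "\<dots> = ennreal \<bar>c\<bar> * (\<integral>\<^sup>+v. ennreal (f (exp (0 + c * v)) * exp (0 + c * v)) \<partial>lborel)"
    by (rule nn_integral_real_affine[OF _ c]) measurable
  finally show ?thesis using R by simp
qed

lemma gamma_scaled:
  fixes A \<nu> :: real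
  assumes A: "A > 0" and nu: "\<nu> > 0"
  shows "(\<integral>\<^sup>+x. indicator {0<..} x * ennreal (x powr (\<nu> - 1) * exp (- (A * x))) \<partial>lborel)
      = ennreal (Gamma \<nu> / A powr \<nu>)"
proof -
  define h where "h = (\<lambda>u::real. indicator {0<..} u * ennreal (u powr (\<nu> - 1) * exp (- u)))"
  have "ennreal (Gamma \<nu>) = (\<integral>\<^sup>+t. ennreal (indicator {0..} t * t powr (\<nu> - 1) / exp t) \<partial>lborel)"
    by (rule Gamma_conv_nn_integral_real[OF nu])
  also have "\<dots> = integral\<^sup>N lborel h"
    by (intro nn_integral_cong) (auto simp: h_def indicator_def exp_minus field_simps)
  also have "\<dots> = ennreal \<bar>A\<bar> * (\<integral>\<^sup>+x. h (0 + A * x) \<partial>lborel)"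
    by (rule nn_integral_real_affine) (use A in \<open>auto simp: h_def\<close>)
  also have "(\<integral>\<^sup>+x. h (0 + A * x) \<partial>lborel) = (\<integral>\<^sup>+x. ennreal (A powr (\<nu> - 1)) * (indicator {0<..} x * ennreal (x powr (\<nu> - 1) * exp (- (A * x)))) \<partial>lborel)"
  proof (intro nn_integral_cong)
    fix x :: real
    show "h (0 + A * x) = ennreal (A powr (\<nu> - 1)) * (indicator {0<..} x * ennreal (x powr (\<nu> - 1) * exp (- (A * x))))"
      using A by (auto simp: h_def indicator_def powr_mult ennreal_mult' zero_less_mult_iff mult.assoc)
  qed
  also have "\<dots> = ennreal (A powr (\<nu> - 1)) * (\<integral>\<^sup>+x. indicator {0<..} x * ennreal (x powr (\<nu> - 1) * exp (- (A * x))) \<partial>lborel)"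
    by (rule nn_integral_cmult) measurable
  finally have eq: "ennreal (Gamma \<nu>) = ennreal (A powr \<nu>) * (\<integral>\<^sup>+x. indicator {0<..} x * ennreal (x powr (\<nu> - 1) * exp (- (A * x))) \<partial>lborel)"
    using A by (simp add: mult.assoc[symmetric] ennreal_mult'[symmetric] powr_diff field_simps)
  have "ennreal (Gamma \<nu> / A powr \<nu>) = ennreal (1 / A powr \<nu>) * ennreal (Gamma \<nu>)"
    using A by (simp add: ennreal_mult'[symmetric])
  also have "\<dots> = (ennreal (1 / A powr \<nu>) * ennreal (A powr \<nu>)) * (\<integral>\<^sup>+x. indicator {0<..} x * ennreal (x powr (\<nu> - 1) * exp (- (A * x))) \<partial>lborel)"
    by (simp add: eq mult.assoc)
  also have "ennreal (1 / A powr \<nu>) * ennreal (A powr \<nu>) = 1"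
    using A by (simp add: ennreal_mult'[symmetric])
  finally show ?thesis by simp
qed

lemma gamma_power:
  fixes A \<nu> c :: real
  assumes A: "A > 0" and nu: "\<nu> > 0" and c: "c \<noteq> 0"
  shows "(\<integral>\<^sup>+s. indicator {0<..} s * ennreal (s powr (c * \<nu> - 1) * exp (- (A * s powr c))) \<partial>lborel)
      = ennreal (Gamma \<nu> / (\<bar>c\<bar> * A powr \<nu>))"
proof -
  let ?I = "(\<integral>\<^sup>+s. indicator {0<..} s * ennreal (s powr (c * \<nu> - 1) * exp (- (A * s powr c))) \<partial>lborel)"
  have "ennreal (Gamma \<nu> / A powr \<nu>) = (\<integral>\<^sup>+x. indicator {0<..} x * ennreal (x powr (\<nu> - 1) * exp (- (A * x))) \<partial>lborel)"
    by (rule gamma_scaled[OF A nu, symmetric])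
  also have "\<dots> = ennreal \<bar>c\<bar> * (\<integral>\<^sup>+y. indicator {0<..} y * ennreal ((y powr c) powr (\<nu> - 1) * exp (- (A * y powr c)) * y powr (c - 1)) \<partial>lborel)"
    by (rule nn_pow_subst[OF _ _ c, where f="\<lambda>x. x powr (\<nu> - 1) * exp (- (A * x))"]) auto
  also have "(\<integral>\<^sup>+y. indicator {0<..} y * ennreal ((y powr c) powr (\<nu> - 1) * exp (- (A * y powr c)) * y powr (c - 1)) \<partial>lborel) = ?I"
  proof (intro nn_integral_cong)
    fix y :: real
    show "indicator {0<..} y * ennreal ((y powr c) powr (\<nu> - 1) * exp (- (A * y powr c)) * y powr (c - 1)) = indicator {0<..} y * ennreal (y powr (c * \<nu> - 1) * exp (- (A * y powr c)))"
    proof (cases "y > 0")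
      case True
      have "(y powr c) powr (\<nu> - 1) * y powr (c - 1) = y powr (c * \<nu> - 1)"
        using True by (simp add: powr_powr powr_add[symmetric] algebra_simps)
      hence "(y powr c) powr (\<nu> - 1) * exp (- (A * y powr c)) * y powr (c - 1) = y powr (c * \<nu> - 1) * exp (- (A * y powr c))"
      proof -
        have "(y powr c) powr (\<nu> - 1) * exp (- (A * y powr c)) * y powr (c - 1) = ((y powr c) powr (\<nu> - 1) * y powr (c - 1)) * exp (- (A * y powr c))"
          by (simp add: ac_simps)
        thus ?thesis using \<open>(y powr c) powr (\<nu> - 1) * y powr (c - 1) = y powr (c * \<nu> - 1)\<close> by simp
      qed
      thus ?thesis by metis
    qed simp
  qed
  finally have eq: "ennreal (Gamma \<nu> / A powr \<nu>) = ennreal \<bar>c\<bar> * ?I" .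
  have "ennreal (Gamma \<nu> / (\<bar>c\<bar> * A powr \<nu>)) = ennreal (1 / \<bar>c\<bar>) * ennreal (Gamma \<nu> / A powr \<nu>)"
    using A nu c by (simp add: ennreal_mult'[symmetric])
  also have "\<dots> = (ennreal (1 / \<bar>c\<bar>) * ennreal \<bar>c\<bar>) * ?I" by (simp add: eq mult.assoc)
  also have "ennreal (1 / \<bar>c\<bar>) * ennreal \<bar>c\<bar> = 1" using c by (simp add: ennreal_mult'[symmetric])
  finally show ?thesis by simp
qed


lemma divpow: "x > 0 \<Longrightarrow> t > 0 \<Longrightarrow> (x / t) powr a = x powr a * t powr (- a)"
  for x t a :: real
  by (simp add: powr_divide powr_minus_divide)

lemma gg_pos_form:
  fixes x t :: real assumes "x > 0" "t > 0"
  shows "gg_pos \<gamma> \<mu> x t = \<gamma> / Gamma \<mu> * (x powr (\<mu> * \<gamma> - 1) * t powr (- (\<mu> * \<gamma>)) * exp (- (x powr \<gamma> * t powr (- \<gamma>))))"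
proof -
  have "t powr (- (\<mu> * \<gamma> - 1)) / t = t powr (- (\<mu> * \<gamma>))"
    using assms by (simp add: powr_diff powr_minus field_simps)
  thus ?thesis using assms unfolding gg_pos_def
    by (simp add: divpow field_simps)
qed

lemma gg_neg_form:
  fixes y t :: real assumes "y > 0" "t > 0"
  shows "gg_neg \<gamma> \<mu> y t = \<gamma> / Gamma \<mu> * (t powr (\<mu> * \<gamma>) * y powr (- \<mu> * \<gamma> - 1) * exp (- (t powr \<gamma> * y powr (- \<gamma>))))"
proof -
  have "t powr (- (- \<mu> * \<gamma> - 1)) / t = t powr (\<mu> * \<gamma>)"
    using assms by (simp add: powr_add field_simps)
  thus ?thesis using assms unfolding gg_neg_def
    by (simp add: divpow field_simps)
qed

lemma comp1:
  fixes \<gamma> \<mu>1 \<mu>2 x t :: real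
  assumes g: "\<gamma> > 0" and m1: "\<mu>1 > 0" and m2: "\<mu>2 > 0" and x: "x > 0" and t: "t > 0"
  shows "comp_density (\<lambda>x s. gg_pos \<gamma> \<mu>1 x s) (\<lambda>s t. gg_neg \<gamma> \<mu>2 s t) x t
     = ennreal (\<gamma> * (x powr (\<gamma> * \<mu>1 - 1) * t powr (\<gamma> * \<mu>2))
                     / (x powr \<gamma> + t powr \<gamma>) powr (\<mu>1 + \<mu>2)
                     * Gamma (\<mu>1 + \<mu>2) / (Gamma \<mu>1 * Gamma \<mu>2))"
proof -
  define K where "K = \<gamma> * \<gamma> / (Gamma \<mu>1 * Gamma \<mu>2) * x powr (\<mu>1 * \<gamma> - 1) * t powr (\<mu>2 * \<gamma>)"
  define A where "A = x powr \<gamma> + t powr \<gamma>"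
  have A: "A > 0" using x t by (simp add: A_def add_pos_pos)
  have K: "K \<ge> 0" using g m1 m2 by (simp add: K_def Gamma_real_pos less_imp_le)
  have pt: "gg_pos \<gamma> \<mu>1 x s * gg_neg \<gamma> \<mu>2 s t = K * (s powr (- \<gamma> * (\<mu>1 + \<mu>2) - 1) * exp (- (A * s powr (- \<gamma>))))"
    if s: "s > 0" for s
  proof -
    have e1: "s powr (- (\<mu>1 * \<gamma>)) * s powr (- \<mu>2 * \<gamma> - 1) = s powr (- \<gamma> * (\<mu>1 + \<mu>2) - 1)"
      using s by (simp add: powr_add[symmetric] algebra_simps)
    have e2: "exp (- (x powr \<gamma> * s powr (- \<gamma>))) * exp (- (t powr \<gamma> * s powr (- \<gamma>))) = exp (- (A * s powr (- \<gamma>)))"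
      by (simp add: exp_add[symmetric] A_def algebra_simps)
    show ?thesis
      using s x t unfolding gg_pos_form[OF x s] gg_neg_form[OF s t] e1[symmetric] e2[symmetric] K_def
      by (simp add: field_simps)
  qed
  have "comp_density (\<lambda>x s. gg_pos \<gamma> \<mu>1 x s) (\<lambda>s t. gg_neg \<gamma> \<mu>2 s t) x t
      = (\<integral>\<^sup>+s. ennreal K * (indicator {0<..} s * ennreal (s powr (- \<gamma> * (\<mu>1 + \<mu>2) - 1) * exp (- (A * s powr (- \<gamma>))))) \<partial>lborel)"
    unfolding comp_density_def
    by (intro nn_integral_cong) (auto simp: indicator_def pt ennreal_mult' K)
  also have "\<dots> = ennreal K * ennreal (Gamma (\<mu>1 + \<mu>2) / (\<bar>- \<gamma>\<bar> * A powr (\<mu>1 + \<mu>2)))"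
  proof -
    have gp: "(\<integral>\<^sup>+s. indicator {0<..} s * ennreal (s powr (- \<gamma> * (\<mu>1 + \<mu>2) - 1) * exp (- (A * s powr (- \<gamma>)))) \<partial>lborel)
       = ennreal (Gamma (\<mu>1 + \<mu>2) / (\<bar>- \<gamma>\<bar> * A powr (\<mu>1 + \<mu>2)))"
      by (rule gamma_power[OF A]) (use m1 m2 g in auto)
    show ?thesis by (subst nn_integral_cmult) (measurable, simp only: gp)
  qed
  also have "\<dots> = ennreal (K * (Gamma (\<mu>1 + \<mu>2) / (\<gamma> * A powr (\<mu>1 + \<mu>2))))"
    using g by (subst ennreal_mult'[OF K]) simp
  also have "K * (Gamma (\<mu>1 + \<mu>2) / (\<gamma> * A powr (\<mu>1 + \<mu>2))) = \<gamma> * (x powr (\<gamma> * \<mu>1 - 1) * t powr (\<gamma> * \<mu>2))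
                     / (x powr \<gamma> + t powr \<gamma>) powr (\<mu>1 + \<mu>2)
                     * Gamma (\<mu>1 + \<mu>2) / (Gamma \<mu>1 * Gamma \<mu>2)"
    using g by (simp add: K_def A_def field_simps mult.commute)
  finally show ?thesis .
qed

lemma comp3:
  fixes \<gamma> \<mu> x t :: real
  assumes g: "\<gamma> > 0" and m: "\<mu> > 0" and x: "x > 0" and t: "t > 0"
  shows "comp_density (\<lambda>x s. gg_neg \<gamma> \<mu> x s) (\<lambda>s t. gg_pos \<gamma> \<mu> s t) x t
     = ennreal (\<gamma> * (x powr (\<gamma> * \<mu> - 1) * t powr (\<gamma> * \<mu>))
                     / (x powr \<gamma> + t powr \<gamma>) powr (\<mu> + \<mu>)
                     * Gamma (\<mu> + \<mu>) / (Gamma \<mu> * Gamma \<mu>))"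
proof -
  define K where "K = \<gamma> * \<gamma> / (Gamma \<mu> * Gamma \<mu>) * x powr (- \<mu> * \<gamma> - 1) * t powr (- (\<mu> * \<gamma>))"
  define B where "B = x powr (- \<gamma>) + t powr (- \<gamma>)"
  have B: "B > 0" using x t by (simp add: B_def add_pos_pos)
  have K: "K \<ge> 0" using g m by (simp add: K_def Gamma_real_pos less_imp_le)
  have pt: "gg_neg \<gamma> \<mu> x s * gg_pos \<gamma> \<mu> s t = K * (s powr (\<gamma> * (\<mu> + \<mu>) - 1) * exp (- (B * s powr \<gamma>)))"
    if s: "s > 0" for s
  proof -
    have e1: "s powr (\<mu> * \<gamma>) * s powr (\<mu> * \<gamma> - 1) = s powr (\<gamma> * (\<mu> + \<mu>) - 1)"
      using s by (simp add: powr_add[symmetric] algebra_simps)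
    have e2: "exp (- (s powr \<gamma> * x powr (- \<gamma>))) * exp (- (s powr \<gamma> * t powr (- \<gamma>))) = exp (- (B * s powr \<gamma>))"
      by (simp add: exp_add[symmetric] B_def algebra_simps)
    show ?thesis
      using s x t unfolding gg_neg_form[OF x s] gg_pos_form[OF s t] e1[symmetric] e2[symmetric] K_def
      by (simp add: field_simps)
  qed
  have "comp_density (\<lambda>x s. gg_neg \<gamma> \<mu> x s) (\<lambda>s t. gg_pos \<gamma> \<mu> s t) x t
      = (\<integral>\<^sup>+s. ennreal K * (indicator {0<..} s * ennreal (s powr (\<gamma> * (\<mu> + \<mu>) - 1) * exp (- (B * s powr \<gamma>)))) \<partial>lborel)"
    unfolding comp_density_def
    by (intro nn_integral_cong) (auto simp: indicator_def pt ennreal_mult' K)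
  also have "\<dots> = ennreal K * ennreal (Gamma (\<mu> + \<mu>) / (\<bar>\<gamma>\<bar> * B powr (\<mu> + \<mu>)))"
  proof -
    have gp: "(\<integral>\<^sup>+s. indicator {0<..} s * ennreal (s powr (\<gamma> * (\<mu> + \<mu>) - 1) * exp (- (B * s powr \<gamma>))) \<partial>lborel)
       = ennreal (Gamma (\<mu> + \<mu>) / (\<bar>\<gamma>\<bar> * B powr (\<mu> + \<mu>)))"
      by (rule gamma_power[OF B]) (use m g in auto)
    show ?thesis by (subst nn_integral_cmult) (measurable, simp only: gp)
  qed
  also have "\<dots> = ennreal (K * (Gamma (\<mu> + \<mu>) / (\<gamma> * B powr (\<mu> + \<mu>))))"
    using g by (subst ennreal_mult'[OF K]) simp
  also have "K * (Gamma (\<mu> + \<mu>) / (\<gamma> * B powr (\<mu> + \<mu>))) = \<gamma> * (x powr (\<gamma> * \<mu> - 1) * t powr (\<gamma> * \<mu>))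
                     / (x powr \<gamma> + t powr \<gamma>) powr (\<mu> + \<mu>)
                     * Gamma (\<mu> + \<mu>) / (Gamma \<mu> * Gamma \<mu>)"
  proof -
    have hB: "B = (x powr \<gamma> + t powr \<gamma>) * (x powr (- \<gamma>) * t powr (- \<gamma>))"
      using x t by (simp add: B_def algebra_simps powr_add[symmetric])
    have hB2: "B powr (\<mu> + \<mu>) = (x powr \<gamma> + t powr \<gamma>) powr (\<mu> + \<mu>) * (x powr (- (\<gamma> * (\<mu> + \<mu>))) * t powr (- (\<gamma> * (\<mu> + \<mu>))))"
      unfolding hB using x t by (simp add: powr_mult powr_powr add_pos_pos)
    have hx: "x powr (- \<mu> * \<gamma> - 1) = x powr (\<gamma> * \<mu> - 1) * x powr (- (\<gamma> * (\<mu> + \<mu>)))"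
      by (subst powr_add[symmetric], rule arg_cong[where f="(powr) x"], simp add: algebra_simps)
    have ht: "t powr (- (\<mu> * \<gamma>)) = t powr (\<gamma> * \<mu>) * t powr (- (\<gamma> * (\<mu> + \<mu>)))"
      using t by (simp add: powr_add[symmetric] algebra_simps)
    show ?thesis unfolding K_def hB2 hx ht using g x t
      by (simp add: field_simps)
  qed
  finally show ?thesis .
qed

lemma prodint:
  fixes \<gamma> \<mu>1 \<mu>2 x t :: real
  assumes g: "\<gamma> > 0" and m1: "\<mu>1 > 0" and m2: "\<mu>2 > 0" and x: "x > 0" and t: "t > 0"
  shows "(\<integral>\<^sup>+a. indicator {0<..} a * ennreal (gg_pos \<gamma> \<mu>1 a (sqrt t) * gg_neg \<gamma> \<mu>2 (x / a) (sqrt t) / a) \<partial>lborel)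
     = ennreal (\<gamma> * (x powr (\<gamma> * \<mu>1 - 1) * t powr (\<gamma> * \<mu>2))
                     / (x powr \<gamma> + t powr \<gamma>) powr (\<mu>1 + \<mu>2)
                     * Gamma (\<mu>1 + \<mu>2) / (Gamma \<mu>1 * Gamma \<mu>2))"
proof -
  define r where "r = sqrt t"
  have r: "r > 0" using t by (simp add: r_def)
  have tr: "t = r * r" using t by (simp add: r_def)
  define K where "K = \<gamma> * \<gamma> / (Gamma \<mu>1 * Gamma \<mu>2) * (r powr (- (\<mu>1 * \<gamma>)) * r powr (\<mu>2 * \<gamma>)) * x powr (- \<mu>2 * \<gamma> - 1)"
  define B where "B = r powr (- \<gamma>) + r powr \<gamma> * x powr (- \<gamma>)"
  have B: "B > 0" using x r by (simp add: B_def add_pos_pos)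
  have K: "K \<ge> 0" using g m1 m2 by (simp add: K_def Gamma_real_pos less_imp_le)
  have pt: "gg_pos \<gamma> \<mu>1 a r * gg_neg \<gamma> \<mu>2 (x / a) r / a = K * (a powr (\<gamma> * (\<mu>1 + \<mu>2) - 1) * exp (- (B * a powr \<gamma>)))"
    if a: "a > 0" for a
  proof -
    have xa: "x / a > 0" using x a by simp
    have e1': "a powr (\<mu>1 * \<gamma> - 1) * a powr (- (- \<mu>2 * \<gamma> - 1)) = a powr 1 * a powr (\<gamma> * (\<mu>1 + \<mu>2) - 1)"
      by (subst powr_add[symmetric], subst powr_add[symmetric], rule arg_cong[where f="(powr) a"], simp add: algebra_simps)
    have e1: "a powr (\<mu>1 * \<gamma> - 1) * a powr (- (- \<mu>2 * \<gamma> - 1)) = a * a powr (\<gamma> * (\<mu>1 + \<mu>2) - 1)"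
      using a e1' by simp
    have e2: "exp (- (a powr \<gamma> * r powr (- \<gamma>))) * exp (- (r powr \<gamma> * (x powr (- \<gamma>) * a powr (- (- \<gamma>))))) = exp (- (B * a powr \<gamma>))"
      by (simp add: exp_add[symmetric] B_def algebra_simps)
    have "gg_pos \<gamma> \<mu>1 a r * gg_neg \<gamma> \<mu>2 (x / a) r / a =
       \<gamma> / Gamma \<mu>1 * (a powr (\<mu>1 * \<gamma> - 1) * r powr (- (\<mu>1 * \<gamma>)) * exp (- (a powr \<gamma> * r powr (- \<gamma>))))
       * (\<gamma> / Gamma \<mu>2 * (r powr (\<mu>2 * \<gamma>) * (x powr (- \<mu>2 * \<gamma> - 1) * a powr (- (- \<mu>2 * \<gamma> - 1))) * exp (- (r powr \<gamma> * (x powr (- \<gamma>) * a powr (- (- \<gamma>))))))) / a"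
      unfolding gg_pos_form[OF a r] gg_neg_form[OF xa r] divpow[OF x a] ..
    also have "\<dots> = (\<gamma> / Gamma \<mu>1 * (\<gamma> / Gamma \<mu>2) * (r powr (- (\<mu>1 * \<gamma>)) * r powr (\<mu>2 * \<gamma>)) * x powr (- \<mu>2 * \<gamma> - 1))
       * ((a powr (\<mu>1 * \<gamma> - 1) * a powr (- (- \<mu>2 * \<gamma> - 1))) * (exp (- (a powr \<gamma> * r powr (- \<gamma>))) * exp (- (r powr \<gamma> * (x powr (- \<gamma>) * a powr (- (- \<gamma>))))))) / a"
      by (simp only: ac_simps)
    also have "\<dots> = K * (a powr (\<gamma> * (\<mu>1 + \<mu>2) - 1) * exp (- (B * a powr \<gamma>)))"
      using a unfolding e1 e2 K_def
      by (simp add: field_simps)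
    finally show ?thesis .
  qed
  have "(\<integral>\<^sup>+a. indicator {0<..} a * ennreal (gg_pos \<gamma> \<mu>1 a (sqrt t) * gg_neg \<gamma> \<mu>2 (x / a) (sqrt t) / a) \<partial>lborel)
      = (\<integral>\<^sup>+a. ennreal K * (indicator {0<..} a * ennreal (a powr (\<gamma> * (\<mu>1 + \<mu>2) - 1) * exp (- (B * a powr \<gamma>)))) \<partial>lborel)"
    unfolding r_def[symmetric]
    by (intro nn_integral_cong) (auto simp: indicator_def pt ennreal_mult' K)
  also have "\<dots> = ennreal K * ennreal (Gamma (\<mu>1 + \<mu>2) / (\<bar>\<gamma>\<bar> * B powr (\<mu>1 + \<mu>2)))"
  proof -
    have gp: "(\<integral>\<^sup>+a. indicator {0<..} a * ennreal (a powr (\<gamma> * (\<mu>1 + \<mu>2) - 1) * exp (- (B * a powr \<gamma>))) \<partial>lborel)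
       = ennreal (Gamma (\<mu>1 + \<mu>2) / (\<bar>\<gamma>\<bar> * B powr (\<mu>1 + \<mu>2)))"
      by (rule gamma_power[OF B]) (use m1 m2 g in auto)
    show ?thesis by (subst nn_integral_cmult) (measurable, simp only: gp)
  qed
  also have "\<dots> = ennreal (K * (Gamma (\<mu>1 + \<mu>2) / (\<gamma> * B powr (\<mu>1 + \<mu>2))))"
    using g by (subst ennreal_mult'[OF K]) simp
  also have "K * (Gamma (\<mu>1 + \<mu>2) / (\<gamma> * B powr (\<mu>1 + \<mu>2))) = \<gamma> * (x powr (\<gamma> * \<mu>1 - 1) * t powr (\<gamma> * \<mu>2))
                     / (x powr \<gamma> + t powr \<gamma>) powr (\<mu>1 + \<mu>2)
                     * Gamma (\<mu>1 + \<mu>2) / (Gamma \<mu>1 * Gamma \<mu>2)"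
  proof -
    have tg: "t powr \<gamma> = r powr \<gamma> * r powr \<gamma>" unfolding tr using r by (simp add: powr_mult)
    have hB: "B = (x powr \<gamma> + t powr \<gamma>) * (r powr (- \<gamma>) * x powr (- \<gamma>))"
    proof -
      have c1: "x powr \<gamma> * x powr (- \<gamma>) = 1" using x by (simp add: powr_add[symmetric])
      have c2: "r powr \<gamma> * r powr (- \<gamma>) = 1" using r by (simp add: powr_add[symmetric])
      have "(x powr \<gamma> + r powr \<gamma> * r powr \<gamma>) * (r powr (- \<gamma>) * x powr (- \<gamma>))
         = (x powr \<gamma> * x powr (- \<gamma>)) * r powr (- \<gamma>) + r powr \<gamma> * (r powr \<gamma> * r powr (- \<gamma>)) * x powr (- \<gamma>)"
        by (simp only: algebra_simps)
      also have "\<dots> = B" unfolding c1 c2 B_def by simp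
      finally show ?thesis unfolding tg by simp
    qed
    have hB2: "B powr (\<mu>1 + \<mu>2) = (x powr \<gamma> + t powr \<gamma>) powr (\<mu>1 + \<mu>2) * (r powr (- (\<gamma> * (\<mu>1 + \<mu>2))) * x powr (- (\<gamma> * (\<mu>1 + \<mu>2))))"
      unfolding hB using x t r by (simp add: powr_mult powr_powr add_pos_pos)
    have hx: "x powr (- \<mu>2 * \<gamma> - 1) = x powr (\<gamma> * \<mu>1 - 1) * x powr (- (\<gamma> * (\<mu>1 + \<mu>2)))"
      by (subst powr_add[symmetric], rule arg_cong[where f="(powr) x"], simp add: algebra_simps)
    have tm: "t powr (\<gamma> * \<mu>2) = r powr (\<gamma> * \<mu>2 + \<gamma> * \<mu>2)" unfolding tr using r
      by (simp add: powr_mult powr_add[symmetric])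
    have hr: "r powr (- (\<mu>1 * \<gamma>)) * r powr (\<mu>2 * \<gamma>) = t powr (\<gamma> * \<mu>2) * r powr (- (\<gamma> * (\<mu>1 + \<mu>2)))"
      unfolding tm
      by (subst powr_add[symmetric], subst powr_add[symmetric], rule arg_cong[where f="(powr) r"], simp add: algebra_simps)
    show ?thesis unfolding K_def hB2 hx hr using g x t r
      by (simp add: field_simps)
  qed
  finally show ?thesis .
qed

lemma gg_pos_nonneg: "\<gamma> > 0 \<Longrightarrow> \<mu> > 0 \<Longrightarrow> t > 0 \<Longrightarrow> gg_pos \<gamma> \<mu> x t \<ge> 0"
  by (simp add: gg_pos_def Gamma_real_pos)

lemma gg_neg_nonneg: "\<gamma> > 0 \<Longrightarrow> \<mu> > 0 \<Longrightarrow> t > 0 \<Longrightarrow> gg_neg \<gamma> \<mu> x t \<ge> 0"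
  by (simp add: gg_neg_def Gamma_real_pos)

lemma prod_eq:
  fixes \<gamma> \<mu>1 \<mu>2 t :: real
  assumes g: "\<gamma> > 0" and m1: "\<mu>1 > 0" and m2: "\<mu>2 > 0" and t: "t > 0"
  shows "prod_law (law_of_density (\<lambda>x. gg_pos \<gamma> \<mu>1 x (sqrt t))) (law_of_density (\<lambda>x. gg_neg \<gamma> \<mu>2 x (sqrt t)))
     = law_of_density (\<lambda>x. \<gamma> * (x powr (\<gamma> * \<mu>1 - 1) * t powr (\<gamma> * \<mu>2))
                     / (x powr \<gamma> + t powr \<gamma>) powr (\<mu>1 + \<mu>2)
                     * Gamma (\<mu>1 + \<mu>2) / (Gamma \<mu>1 * Gamma \<mu>2))"
    (is "prod_law ?M1 ?M2 = law_of_density ?Q")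
proof -
  define g1 where "g1 = (\<lambda>a. indicator {0<..} a * ennreal (gg_pos \<gamma> \<mu>1 a (sqrt t)))"
  define g2 where "g2 = (\<lambda>a. indicator {0<..} a * ennreal (gg_neg \<gamma> \<mu>2 a (sqrt t)))"
  have M1: "?M1 = density lborel g1" by (simp add: law_of_density_def g1_def)
  have M2: "?M2 = density lborel g2" by (simp add: law_of_density_def g2_def)
  have g1m[measurable]: "g1 \<in> borel_measurable borel" unfolding g1_def gg_pos_def by measurable
  have g2m[measurable]: "g2 \<in> borel_measurable borel" unfolding g2_def gg_neg_def by measurable
  have st: "sqrt t > 0" using t by simp
  interpret S2: sigma_finite_measure "density lborel g2"
    by (subst sigma_finite_measure.sigma_finite_iff_density_finite[OF sigma_finite_lborel]) (use g2m in \<open>auto simp: g2_def indicator_def\<close>)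
  define H :: "real set \<Rightarrow> real \<Rightarrow> real \<Rightarrow> ennreal" where "H = (\<lambda>A a y. indicator A y * (indicator {0<..} y * (indicator {0<..} a * ennreal (gg_pos \<gamma> \<mu>1 a (sqrt t) * gg_neg \<gamma> \<mu>2 (y / a) (sqrt t) / a))))" 
  show ?thesis
  proof (rule measure_eqI)
    show "sets (prod_law ?M1 ?M2) = sets (law_of_density ?Q)"
      by (simp add: prod_law_def law_of_density_def)
  next
    fix A assume "A \<in> sets (prod_law ?M1 ?M2)"
    hence A[measurable]: "A \<in> sets borel" by (simp add: prod_law_def)
    have Hm: "case_prod (H A) \<in> borel_measurable (lborel \<Otimes>\<^sub>M lborel)"
      unfolding H_def gg_pos_def gg_neg_def by measurable
    have "emeasure (prod_law ?M1 ?M2) A = (\<integral>\<^sup>+x. indicator A x \<partial>prod_law ?M1 ?M2)"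
      using A by (simp add: prod_law_def)
    also have "\<dots> = (\<integral>\<^sup>+p. indicator A (fst p * snd p) \<partial>(density lborel g1 \<Otimes>\<^sub>M density lborel g2))"
      unfolding prod_law_def M1 M2
      by (subst nn_integral_distr) (auto simp: case_prod_beta)
    also have "\<dots> = (\<integral>\<^sup>+a. \<integral>\<^sup>+b. indicator A (a * b) \<partial>density lborel g2 \<partial>density lborel g1)"
      by (subst S2.nn_integral_fst[symmetric]) auto
    also have "\<dots> = (\<integral>\<^sup>+a. g1 a * \<integral>\<^sup>+b. g2 b * indicator A (a * b) \<partial>lborel \<partial>lborel)"
      by (subst nn_integral_density) (auto simp: nn_integral_density)
    also have "\<dots> = (\<integral>\<^sup>+a. \<integral>\<^sup>+y. H A a y \<partial>lborel \<partial>lborel)"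
    proof (intro nn_integral_cong)
      fix a :: real
      show "g1 a * (\<integral>\<^sup>+b. g2 b * indicator A (a * b) \<partial>lborel) = (\<integral>\<^sup>+y. H A a y \<partial>lborel)"
      proof (cases "a > 0")
        case False
        thus ?thesis by (simp add: g1_def H_def)
      next
        case True
        have "(\<integral>\<^sup>+b. g2 b * indicator A (a * b) \<partial>lborel)
            = ennreal \<bar>1 / a\<bar> * (\<integral>\<^sup>+y. g2 (0 + (1 / a) * y) * indicator A (a * (0 + (1 / a) * y)) \<partial>lborel)"
          by (rule nn_integral_real_affine) (use True in auto)
        also have "(\<integral>\<^sup>+y. g2 (0 + (1 / a) * y) * indicator A (a * (0 + (1 / a) * y)) \<partial>lborel)
             = (\<integral>\<^sup>+y. g2 (y / a) * indicator A y \<partial>lborel)"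
          using True by simp
        finally have eq: "(\<integral>\<^sup>+b. g2 b * indicator A (a * b) \<partial>lborel) = ennreal (1 / a) * (\<integral>\<^sup>+y. g2 (y / a) * indicator A y \<partial>lborel)"
          using True by simp
        have "g1 a * (\<integral>\<^sup>+b. g2 b * indicator A (a * b) \<partial>lborel) = (\<integral>\<^sup>+y. (g1 a * ennreal (1 / a)) * (g2 (y / a) * indicator A y) \<partial>lborel)"
          unfolding eq by (subst nn_integral_cmult) (auto simp: mult.assoc)
        also have "\<dots> = (\<integral>\<^sup>+y. H A a y \<partial>lborel)"
        proof (intro nn_integral_cong)
          fix y :: real
          show "(g1 a * ennreal (1 / a)) * (g2 (y / a) * indicator A y) = H A a y"
          proof (cases "y > 0")
            case False
            hence "\<not> y / a > 0" using True by (simp add: zero_less_divide_iff)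
            thus ?thesis using False by (simp add: g2_def H_def)
          next
            case yp: True
            have p1: "gg_pos \<gamma> \<mu>1 a (sqrt t) \<ge> 0" by (rule gg_pos_nonneg[OF g m1 st])
            have p2: "gg_neg \<gamma> \<mu>2 (y / a) (sqrt t) \<ge> 0" by (rule gg_neg_nonneg[OF g m2 st])
            have "y / a > 0" using True yp by simp
            thus ?thesis using True yp p1 p2
              by (simp add: g1_def g2_def H_def ennreal_mult'[symmetric] mult_ac divide_inverse)
          qed
        qed
        finally show ?thesis .
      qed
    qed
    also have "\<dots> = (\<integral>\<^sup>+y. \<integral>\<^sup>+a. H A a y \<partial>lborel \<partial>lborel)"
      by (rule lborel_pair.Fubini'[symmetric]) (rule Hm)
    also have "\<dots> = (\<integral>\<^sup>+y. indicator A y * (indicator {0<..} y * ennreal (?Q y)) \<partial>lborel)"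
    proof (intro nn_integral_cong)
      fix y :: real
      show "(\<integral>\<^sup>+a. H A a y \<partial>lborel) = indicator A y * (indicator {0<..} y * ennreal (?Q y))"
      proof (cases "y > 0")
        case False
        thus ?thesis by (simp add: H_def)
      next
        case True
        have "(\<integral>\<^sup>+a. H A a y \<partial>lborel) = indicator A y * (indicator {0<..} y *
           (\<integral>\<^sup>+a. indicator {0<..} a * ennreal (gg_pos \<gamma> \<mu>1 a (sqrt t) * gg_neg \<gamma> \<mu>2 (y / a) (sqrt t) / a) \<partial>lborel))"
        proof -
          have mm: "(\<lambda>a. indicator {0<..} a * ennreal (gg_pos \<gamma> \<mu>1 a (sqrt t) * gg_neg \<gamma> \<mu>2 (y / a) (sqrt t) / a)) \<in> borel_measurable lborel"
            unfolding gg_pos_def gg_neg_def by measurable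
          have "(\<integral>\<^sup>+a. H A a y \<partial>lborel) = (\<integral>\<^sup>+a. (indicator A y * indicator {0<..} y) * (indicator {0<..} a * ennreal (gg_pos \<gamma> \<mu>1 a (sqrt t) * gg_neg \<gamma> \<mu>2 (y / a) (sqrt t) / a)) \<partial>lborel)"
            by (simp add: H_def mult.assoc)
          also have "\<dots> = (indicator A y * indicator {0<..} y) * (\<integral>\<^sup>+a. indicator {0<..} a * ennreal (gg_pos \<gamma> \<mu>1 a (sqrt t) * gg_neg \<gamma> \<mu>2 (y / a) (sqrt t) / a) \<partial>lborel)"
            by (rule nn_integral_cmult[OF mm])
          finally show ?thesis by (simp add: mult.assoc)
        qed
        also have "\<dots> = indicator A y * (indicator {0<..} y * ennreal (?Q y))"
          by (simp only: prodint[OF g m1 m2 True t])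
        finally show ?thesis .
      qed
    qed
    also have "\<dots> = emeasure (law_of_density ?Q) A"
      unfolding law_of_density_def using A
      by (subst emeasure_density) (auto simp: mult_ac)
    finally show "emeasure (prod_law ?M1 ?M2) A = emeasure (law_of_density ?Q) A" .
  qed
qed


theorem mainTheorem4:
  fixes \<gamma> \<mu>1 \<mu>2 :: real
  assumes "\<gamma> > 0" and "\<mu>1 > 0" and "\<mu>2 > 0"
  shows "(\<forall>t>0. comp_law (\<lambda>x s. gg_pos \<gamma> \<mu>1 x s) (\<lambda>s t. gg_neg \<gamma> \<mu>2 s t) t
              = law_of_density (\<lambda>x. \<gamma> * (x powr (\<gamma> * \<mu>1 - 1) * t powr (\<gamma> * \<mu>2))
                     / (x powr \<gamma> + t powr \<gamma>) powr (\<mu>1 + \<mu>2)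
                     * Gamma (\<mu>1 + \<mu>2) / (Gamma \<mu>1 * Gamma \<mu>2)))
       \<and> (\<forall>t>0. comp_law (\<lambda>x s. gg_pos \<gamma> \<mu>1 x s) (\<lambda>s t. gg_neg \<gamma> \<mu>2 s t) t
              = prod_law (law_of_density (\<lambda>x. gg_pos \<gamma> \<mu>1 x (sqrt t)))
                         (law_of_density (\<lambda>x. gg_neg \<gamma> \<mu>2 x (sqrt t))))
       \<and> (\<forall>\<mu>>0. \<forall>t>0. comp_law (\<lambda>x s. gg_neg \<gamma> \<mu> x s) (\<lambda>s t. gg_pos \<gamma> \<mu> s t) t
              = comp_law (\<lambda>x s. gg_pos \<gamma> \<mu> x s) (\<lambda>s t. gg_neg \<gamma> \<mu> s t) t)"
proof -
  have P1: "comp_law (\<lambda>x s. gg_pos \<gamma> m1 x s) (\<lambda>s t. gg_neg \<gamma> m2 s t) t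
              = law_of_density (\<lambda>x. \<gamma> * (x powr (\<gamma> * m1 - 1) * t powr (\<gamma> * m2))
                     / (x powr \<gamma> + t powr \<gamma>) powr (m1 + m2)
                     * Gamma (m1 + m2) / (Gamma m1 * Gamma m2))"
    if "m1 > 0" "m2 > 0" "t > 0" for m1 m2 t :: real
    unfolding comp_law_def law_of_density_def
  proof (intro arg_cong[where f="density lborel"] ext)
    fix x :: real
    show "indicator {0<..} x * comp_density (\<lambda>x s. gg_pos \<gamma> m1 x s) (\<lambda>s t. gg_neg \<gamma> m2 s t) x t =
       indicator {0<..} x * ennreal (\<gamma> * (x powr (\<gamma> * m1 - 1) * t powr (\<gamma> * m2))
                     / (x powr \<gamma> + t powr \<gamma>) powr (m1 + m2)
                     * Gamma (m1 + m2) / (Gamma m1 * Gamma m2))"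
      using comp1[OF assms(1) that(1,2) _ that(3), of x] by (cases "x > 0") auto
  qed
  have P3: "comp_law (\<lambda>x s. gg_neg \<gamma> m x s) (\<lambda>s t. gg_pos \<gamma> m s t) t
              = law_of_density (\<lambda>x. \<gamma> * (x powr (\<gamma> * m - 1) * t powr (\<gamma> * m))
                     / (x powr \<gamma> + t powr \<gamma>) powr (m + m)
                     * Gamma (m + m) / (Gamma m * Gamma m))"
    if "m > 0" "t > 0" for m t :: real
    unfolding comp_law_def law_of_density_def
  proof (intro arg_cong[where f="density lborel"] ext)
    fix x :: real
    show "indicator {0<..} x * comp_density (\<lambda>x s. gg_neg \<gamma> m x s) (\<lambda>s t. gg_pos \<gamma> m s t) x t =
       indicator {0<..} x * ennreal (\<gamma> * (x powr (\<gamma> * m - 1) * t powr (\<gamma> * m))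
                     / (x powr \<gamma> + t powr \<gamma>) powr (m + m)
                     * Gamma (m + m) / (Gamma m * Gamma m))"
      using comp3[OF assms(1) that(1) _ that(2), of x] by (cases "x > 0") auto
  qed
  show ?thesis
    using P1[OF assms(2,3)] prod_eq[OF assms] P3 P1 by auto
qed

end
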